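(* Let $m\ge n$, let $\mathcal{U}$ be an open interval in $\mathbb{R}$, and let $F:\mathcal{U}\rightarrow M_{m\times n}(\mathbb{C})$ be a function each of whose entries is an analytic function on $\mathcal{U}$. Let $\mathcal{Y}(\mathcal{U})=\{x\in\mathcal{U} : F(x)\text{ has repeated singular values}\}$. Then either $\mathcal{Y}(\mathcal{U})=\mathcal{U}$ or $\mathcal{Y}(\mathcal{U})$ has no limit points in $\mathcal{U}$.
   Context: $M_{m\times n}(\mathbb{C})$ denotes the set of $m\times n$ complex matrices; throughout $m\ge n$. The singular values of $A\in M_{m\times n}(\mathbb{C})$ are the $n$ nonnegative square roots of the eigenvalues of $A^{\ast}A$, counted with multiplicity; $A$ has repeated singular values if two of these $n$ values coincide. A function on an open interval is analytic if around each point it is given by a convergent power series in the real variable (complex coefficients allowed). *)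

theory Defs
  imports "HOL-Analysis.Analysis" "Jordan_Normal_Form.Schur_Decomposition"
begin

definition conj_transpose :: "complex mat \<Rightarrow> complex mat" where
  "conj_transpose A = mat_adjoint A"

definition singular_values :: "complex mat \<Rightarrow> real multiset" where
  "singular_values A =
     image_mset (\<lambda>z. sqrt (Re z)) (proots (char_poly (conj_transpose A * A)))"

definition has_repeated_singular_values :: "complex mat \<Rightarrow> bool" where
  "has_repeated_singular_values A \<longleftrightarrow> (\<exists>s. count (singular_values A) s \<ge> 2)"

definition real_analytic_on :: "(real \<Rightarrow> complex) \<Rightarrow> real set \<Rightarrow> bool" where
  "real_analytic_on f U \<longleftrightarrow>
     (\<forall>x\<in>U. \<exists>r>0. \<exists>c::nat \<Rightarrow> complex. ball x r \<subseteq> U \<and>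
        (\<forall>y. \<bar>y - x\<bar> < r \<longrightarrow> (\<lambda>k. c k * complex_of_real (y - x) ^ k) sums f y))"

end

theory Submission
  imports Defs "HOL-Complex_Analysis.Complex_Analysis"
begin

definition LA :: "real set \<Rightarrow> (real \<Rightarrow> complex) \<Rightarrow> bool" where
  "LA U f \<longleftrightarrow> (\<forall>x\<in>U. \<exists>r>0. \<exists>g. g holomorphic_on ball (complex_of_real x) r \<and> ball x r \<subseteq> U \<and>
      (\<forall>y. \<bar>y - x\<bar> < r \<longrightarrow> f y = g (complex_of_real y)))"

lemma LA_cong:
  assumes "LA U f" "\<And>x. x \<in> U \<Longrightarrow> f x = g x"
  shows "LA U g"
  unfolding LA_def
proof
  fix x assume "x \<in> U"
  then obtain r h where r: "r > 0" "h holomorphic_on ball (complex_of_real x) r" "ball x r \<subseteq> U"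
      "\<forall>y. \<bar>y - x\<bar> < r \<longrightarrow> f y = h (complex_of_real y)"
    using assms(1) unfolding LA_def by blast
  have "\<forall>y. \<bar>y - x\<bar> < r \<longrightarrow> g y = h (complex_of_real y)"
  proof (intro allI impI)
    fix y assume y: "\<bar>y - x\<bar> < r"
    then have "y \<in> U" using r(3) by (auto simp: dist_real_def)
    then show "g y = h (complex_of_real y)" using r(4) assms(2) y by metis
  qed
  then show "\<exists>r>0. \<exists>g'. g' holomorphic_on ball (complex_of_real x) r \<and> ball x r \<subseteq> U \<and>
      (\<forall>y. \<bar>y - x\<bar> < r \<longrightarrow> g y = g' (complex_of_real y))" using r by blast
qed

lemma LA_const:
  assumes "open U" shows "LA U (\<lambda>x. c)"
  unfolding LA_def
proof
  fix x assume "x \<in> U"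
  then obtain r where r: "r > 0" "ball x r \<subseteq> U" using assms open_contains_ball by blast
  show "\<exists>r>0. \<exists>g. g holomorphic_on ball (complex_of_real x) r \<and> ball x r \<subseteq> U \<and>
      (\<forall>y. \<bar>y - x\<bar> < r \<longrightarrow> c = g (complex_of_real y))"
    by (rule exI[of _ r], rule conjI[OF r(1)], rule exI[of _ "\<lambda>z. c"]) (use r in auto)
qed

lemma LA_binop:
  assumes op: "\<And>S a b. a holomorphic_on S \<Longrightarrow> b holomorphic_on S \<Longrightarrow> (\<lambda>z. op (a z) (b z)) holomorphic_on S"
    and f: "LA U f" and g: "LA U g"
  shows "LA U (\<lambda>x. op (f x) (g x))"
  unfolding LA_def
proof
  fix x assume x: "x \<in> U"
  obtain r1 h1 where r1: "r1 > 0" "h1 holomorphic_on ball (complex_of_real x) r1" "ball x r1 \<subseteq> U"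
      "\<forall>y. \<bar>y - x\<bar> < r1 \<longrightarrow> f y = h1 (complex_of_real y)"
    using f x unfolding LA_def by blast
  obtain r2 h2 where r2: "r2 > 0" "h2 holomorphic_on ball (complex_of_real x) r2" "ball x r2 \<subseteq> U"
      "\<forall>y. \<bar>y - x\<bar> < r2 \<longrightarrow> g y = h2 (complex_of_real y)"
    using g x unfolding LA_def by blast
  define r where "r = min r1 r2"
  have rpos: "r > 0" using r1 r2 by (simp add: r_def)
  have "h1 holomorphic_on ball (complex_of_real x) r" "h2 holomorphic_on ball (complex_of_real x) r"
    using r1(2) r2(2) by (auto intro: holomorphic_on_subset simp: r_def)
  then have hol: "(\<lambda>z. op (h1 z) (h2 z)) holomorphic_on ball (complex_of_real x) r" by (rule op)
  have sub: "ball x r \<subseteq> U" using r1(3) by (auto simp: r_def)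
  have eq: "\<forall>y. \<bar>y - x\<bar> < r \<longrightarrow> op (f y) (g y) = op (h1 (complex_of_real y)) (h2 (complex_of_real y))"
    using r1(4) r2(4) by (auto simp: r_def)
  show "\<exists>r>0. \<exists>h. h holomorphic_on ball (complex_of_real x) r \<and> ball x r \<subseteq> U \<and>
      (\<forall>y. \<bar>y - x\<bar> < r \<longrightarrow> op (f y) (g y) = h (complex_of_real y))"
    using rpos hol sub eq by blast
qed

lemma LA_add: "LA U f \<Longrightarrow> LA U g \<Longrightarrow> LA U (\<lambda>x. f x + g x)"
  by (rule LA_binop[where op = "(+)"]) (auto intro: holomorphic_intros)

lemma LA_mult: "LA U f \<Longrightarrow> LA U g \<Longrightarrow> LA U (\<lambda>x. f x * g x)"
  by (rule LA_binop[where op = "(*)"]) (auto intro: holomorphic_intros)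

lemma LA_sum:
  assumes "open U" "finite A" "\<And>a. a \<in> A \<Longrightarrow> LA U (f a)"
  shows "LA U (\<lambda>x. \<Sum>a\<in>A. f a x)"
  using assms(2,3)
proof (induction A rule: finite_induct)
  case empty
  then show ?case using LA_const[OF assms(1)] by simp
next
  case (insert a A)
  then show ?case by (simp add: LA_add)
qed

lemma LA_prod:
  assumes "open U" "finite A" "\<And>a. a \<in> A \<Longrightarrow> LA U (f a)"
  shows "LA U (\<lambda>x. \<Prod>a\<in>A. f a x)"
  using assms(2,3)
proof (induction A rule: finite_induct)
  case empty
  then show ?case using LA_const[OF assms(1)] by simp
next
  case (insert a A)
  then show ?case by (simp add: LA_mult)
qed

lemma RA_cnj:
  assumes "real_analytic_on f U"
  shows "real_analytic_on (\<lambda>x. cnj (f x)) U"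
  unfolding real_analytic_on_def
proof
  fix x assume "x \<in> U"
  then obtain r c where r: "r > 0" "ball x r \<subseteq> U"
     "\<forall>y. \<bar>y - x\<bar> < r \<longrightarrow> (\<lambda>k. c k * complex_of_real (y - x) ^ k) sums f y"
    using assms unfolding real_analytic_on_def by blast
  have "\<forall>y. \<bar>y - x\<bar> < r \<longrightarrow> (\<lambda>k. cnj (c k) * complex_of_real (y - x) ^ k) sums cnj (f y)"
  proof (intro allI impI)
    fix y assume "\<bar>y - x\<bar> < r"
    then have "(\<lambda>k. c k * complex_of_real (y - x) ^ k) sums f y" using r by blast
    then have "(\<lambda>k. cnj (c k * complex_of_real (y - x) ^ k)) sums cnj (f y)" by (simp only: sums_cnj)
    then show "(\<lambda>k. cnj (c k) * complex_of_real (y - x) ^ k) sums cnj (f y)" by simp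
  qed
  then show "\<exists>r>0. \<exists>c. ball x r \<subseteq> U \<and>
        (\<forall>y. \<bar>y - x\<bar> < r \<longrightarrow> (\<lambda>k. c k * complex_of_real (y - x) ^ k) sums cnj (f y))"
    using r by (intro exI[of _ r] exI[of _ "\<lambda>k. cnj (c k)"] conjI) auto
qed

lemma RA_LA:
  assumes "real_analytic_on f U"
  shows "LA U f"
  unfolding LA_def
proof
  fix x assume "x \<in> U"
  then obtain r c where r: "r > 0" "ball x r \<subseteq> U"
     "\<forall>y. \<bar>y - x\<bar> < r \<longrightarrow> (\<lambda>k. c k * complex_of_real (y - x) ^ k) sums f y"
    using assms unfolding real_analytic_on_def by blast
  have cr: "conv_radius c \<ge> ereal r"
  proof (rule conv_radius_geI_ex')
    fix r' :: real assume "0 < r'" "ereal r' < ereal r"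
    then have "\<bar>(x + r') - x\<bar> < r" by simp
    then have "(\<lambda>k. c k * complex_of_real ((x + r') - x) ^ k) sums f (x + r')" using r by blast
    then show "summable (\<lambda>n. c n * of_real r' ^ n)" by (simp add: sums_iff)
  qed
  define h where "h = (\<lambda>w::complex. \<Sum>n. c n * w ^ n)"
  have hh: "h holomorphic_on ball 0 r"
    unfolding holomorphic_on_open[OF open_ball]
  proof
    fix w :: complex assume "w \<in> ball 0 r"
    then have "ereal (norm w) < ereal r" by (simp add: dist_norm)
    then have "ereal (norm w) < conv_radius c" using cr less_le_trans by blast
    then show "\<exists>f'. (h has_field_derivative f') (at w)"
      unfolding h_def using has_field_derivative_powser by blast
  qed
  define g where "g = h \<circ> (\<lambda>z. z - complex_of_real x)"
  have gh: "g holomorphic_on ball (complex_of_real x) r"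
    unfolding g_def
    by (rule holomorphic_on_compose_gen[OF _ hh]) (auto intro: holomorphic_intros simp: dist_norm norm_minus_commute)
  have "\<forall>y. \<bar>y - x\<bar> < r \<longrightarrow> f y = g (complex_of_real y)"
  proof (intro allI impI)
    fix y assume "\<bar>y - x\<bar> < r"
    then have "(\<lambda>k. c k * complex_of_real (y - x) ^ k) sums f y" using r by blast
    then show "f y = g (complex_of_real y)"
      unfolding g_def h_def by (simp add: sums_iff)
  qed
  then show "\<exists>r>0. \<exists>g. g holomorphic_on ball (complex_of_real x) r \<and> ball x r \<subseteq> U \<and>
      (\<forall>y. \<bar>y - x\<bar> < r \<longrightarrow> f y = g (complex_of_real y))"
    using r gh by blast
qed

lemma LA_key:
  assumes "LA U f" "x \<in> U" "x islimpt {y \<in> U. f y = 0}"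
  shows "\<exists>r>0. \<forall>y \<in> ball x r. f y = 0"
proof -
  obtain r g where r: "r > 0" "g holomorphic_on ball (complex_of_real x) r" "ball x r \<subseteq> U"
      "\<forall>y. \<bar>y - x\<bar> < r \<longrightarrow> f y = g (complex_of_real y)"
    using assms(1,2) unfolding LA_def by blast
  define Zc where "Zc = complex_of_real ` ({y \<in> U. f y = 0} \<inter> ball x r)"
  have lim: "complex_of_real x islimpt Zc"
    unfolding islimpt_approachable
  proof (intro allI impI)
    fix e :: real assume e: "e > 0"
    then obtain y where y: "y \<in> {y \<in> U. f y = 0}" "y \<noteq> x" "dist y x < min e r"
      using assms(3) r(1) unfolding islimpt_approachable by (meson min_less_iff_conj)
    then have "complex_of_real y \<in> Zc" unfolding Zc_def by (auto simp: dist_commute)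
    moreover have "complex_of_real y \<noteq> complex_of_real x" using y by simp
    moreover have "dist (complex_of_real y) (complex_of_real x) < e" using y by (simp add: dist_of_real)
    ultimately show "\<exists>x'\<in>Zc. x' \<noteq> complex_of_real x \<and> dist x' (complex_of_real x) < e" by blast
  qed
  have sub: "Zc \<subseteq> ball (complex_of_real x) r"
    unfolding Zc_def by (auto simp: dist_of_real dist_commute)
  have z0: "g z = 0" if "z \<in> Zc" for z
  proof -
    from that obtain y where y: "y \<in> U" "f y = 0" "y \<in> ball x r" "z = complex_of_real y"
      unfolding Zc_def by auto
    then have "\<bar>y - x\<bar> < r" by (simp add: dist_real_def abs_minus_commute)
    then show ?thesis using r(4) y by metis
  qed
  have "\<forall>y \<in> ball x r. f y = 0"
  proof
    fix y assume y: "y \<in> ball x r"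
    then have yx: "\<bar>y - x\<bar> < r" by (simp add: dist_real_def abs_minus_commute)
    have "complex_of_real y \<in> ball (complex_of_real x) r" using y by (simp add: dist_of_real)
    then have "g (complex_of_real y) = 0"
      using analytic_continuation[OF r(2) open_ball connected_ball sub _ lim z0] r(1) by simp
    then show "f y = 0" using r(4) yx by metis
  qed
  then show ?thesis using r(1) by blast
qed

lemma LA_identity:
  assumes "LA U f" "connected U"
  shows "(\<forall>x\<in>U. f x = 0) \<or> (\<forall>x\<in>U. \<not> x islimpt {y \<in> U. f y = 0})"
proof -
  define W where "W = {x. \<exists>r>0. \<forall>y \<in> ball x r. f y = 0}"
  have oW: "open W"
    unfolding open_contains_ball
  proof
    fix x assume "x \<in> W"
    then obtain r where r: "r > 0" "\<forall>y \<in> ball x r. f y = 0" unfolding W_def by blast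
    have "ball x r \<subseteq> W"
    proof
      fix y assume y: "y \<in> ball x r"
      define s where "s = r - dist x y"
      have "s > 0" using y by (simp add: s_def)
      moreover have "\<forall>z \<in> ball y s. f z = 0"
        using r(2) by (auto simp: s_def) (metis dist_triangle less_diff_eq mem_ball add.commute le_less_trans)
      ultimately show "y \<in> W" unfolding W_def by blast
    qed
    then show "\<exists>e>0. ball x e \<subseteq> W" using r by blast
  qed
  have op: "openin (top_of_set U) (U \<inter> W)" by (rule openin_open_Int[OF oW])
  have cl: "closedin (top_of_set U) (U \<inter> W)"
    unfolding closedin_limpt
  proof (intro conjI allI impI)
    fix x assume x: "x islimpt U \<inter> W \<and> x \<in> U"
    have "U \<inter> W \<subseteq> {y \<in> U. f y = 0}" unfolding W_def by auto
    then have "x islimpt {y \<in> U. f y = 0}" using x islimpt_subset by blast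
    then show "x \<in> U \<inter> W" using LA_key[OF assms(1)] x unfolding W_def by blast
  qed auto
  from assms(2) op cl have "U \<inter> W = {} \<or> U \<inter> W = U" unfolding connected_clopen by blast
  then show ?thesis
  proof
    assume e: "U \<inter> W = {}"
    have "\<not> x islimpt {y \<in> U. f y = 0}" if "x \<in> U" for x
      using LA_key[OF assms(1) that] e that unfolding W_def by blast
    then show ?thesis by blast
  next
    assume e: "U \<inter> W = U"
    have "f x = 0" if "x \<in> U" for x
    proof -
      from that e have "x \<in> W" by blast
      then show ?thesis unfolding W_def by auto
    qed
    then show ?thesis by blast
  qed
qed

definition mtr :: "nat \<Rightarrow> complex mat \<Rightarrow> complex" where
  "mtr n X = (\<Sum>i<n. X $$ (i, i))"

lemma mtr_comm:
  assumes "X \<in> carrier_mat n n" "Y \<in> carrier_mat n n"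
  shows "mtr n (X * Y) = mtr n (Y * X)"
proof -
  have "mtr n (X * Y) = (\<Sum>i<n. \<Sum>l<n. X $$ (i, l) * Y $$ (l, i))"
    unfolding mtr_def using assms
    by (intro sum.cong refl) (auto simp: scalar_prod_def atLeast0LessThan)
  also have "\<dots> = (\<Sum>l<n. \<Sum>i<n. Y $$ (l, i) * X $$ (i, l))"
    by (subst sum.swap) (simp add: mult.commute)
  also have "\<dots> = mtr n (Y * X)"
    unfolding mtr_def using assms
    by (intro sum.cong refl) (auto simp: scalar_prod_def atLeast0LessThan)
  finally show ?thesis .
qed

lemma mult_index_sum:
  assumes "X \<in> carrier_mat n n" "Y \<in> carrier_mat n n" "i < n" "j < n"
  shows "(X * Y) $$ (i, j) = (\<Sum>l<n. X $$ (i, l) * Y $$ (l, j))"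
  using assms by (auto simp: scalar_prod_def atLeast0LessThan)

lemma upper_tri_pow:
  fixes T :: "complex mat"
  assumes T: "T \<in> carrier_mat n n" "upper_triangular T"
  shows "upper_triangular (T ^\<^sub>m k) \<and> (\<forall>i<n. (T ^\<^sub>m k) $$ (i, i) = T $$ (i, i) ^ k)"
proof (induction k)
  case 0
  then show ?case using T by auto
next
  case (Suc k)
  let ?S = "T ^\<^sub>m k"
  have S: "?S \<in> carrier_mat n n" using T by auto
  have ut: "?S $$ (i, l) = 0" if "i < n" "l < i" for i l
    using Suc.IH that S by (auto simp: upper_triangular_def)
  have uT: "T $$ (l, j) = 0" if "l < n" "j < l" for l j
    using T that by (auto simp: upper_triangular_def)
  have prod: "(?S * T) $$ (i, j) = (\<Sum>l<n. ?S $$ (i, l) * T $$ (l, j))" if "i < n" "j < n" for i j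
    using S T that by (auto simp: scalar_prod_def atLeast0LessThan)
  have z: "?S $$ (i, l) * T $$ (l, j) = 0" if "i < n" "j < n" "l < n" "l \<noteq> i \<or> i \<noteq> j" "j \<le> i" for i j l
  proof (cases "l < i")
    case True then show ?thesis using ut that by simp
  next
    case False
    then have "j < l" using that by auto
    then show ?thesis using uT that by simp
  qed
  have a: "upper_triangular (?S * T)"
    unfolding upper_triangular_def
  proof (intro allI impI)
    fix i j assume ij: "i < dim_row (?S * T)" "j < i"
    then have i: "i < n" using T(1) by simp
    have "(\<Sum>l<n. ?S $$ (i, l) * T $$ (l, j)) = 0"
      by (rule sum.neutral) (use z i ij in auto)
    then show "(?S * T) $$ (i, j) = 0" using prod i ij by simp
  qed
  have b: "(?S * T) $$ (i, i) = T $$ (i, i) ^ Suc k" if i: "i < n" for i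
  proof -
    have "(\<Sum>l<n. ?S $$ (i, l) * T $$ (l, i)) = ?S $$ (i, i) * T $$ (i, i) +
        (\<Sum>l\<in>{..<n} - {i}. ?S $$ (i, l) * T $$ (l, i))"
      by (rule sum.remove) (use i in auto)
    also have "(\<Sum>l\<in>{..<n} - {i}. ?S $$ (i, l) * T $$ (l, i)) = 0"
      by (rule sum.neutral) (use z i in auto)
    finally have "(\<Sum>l<n. ?S $$ (i, l) * T $$ (l, i)) = ?S $$ (i, i) * T $$ (i, i)" by simp
    then show ?thesis using prod[OF i i] Suc.IH i by (simp add: power_Suc2)
  qed
  show ?case using a b by simp
qed

lemma trace_pow_schur:
  fixes M :: "complex mat"
  assumes M: "M \<in> carrier_mat n n" and c: "char_poly M = (\<Prod>a\<leftarrow>as. [:- a, 1:])"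
  shows "mtr n (M ^\<^sub>m k) = (\<Sum>a\<leftarrow>as. a ^ k)"
proof -
  obtain T P Q where sd: "schur_decomposition M as = (T, P, Q)" by (cases "schur_decomposition M as")
  from schur_decomposition[OF M c sd] have w: "similar_mat_wit M T P Q" and ut: "upper_triangular T"
    and dg: "diag_mat T = as" by auto
  from w M have car: "T \<in> carrier_mat n n" "P \<in> carrier_mat n n" "Q \<in> carrier_mat n n" "Q * P = 1\<^sub>m n"
    unfolding similar_mat_wit_def Let_def by auto
  have Tk: "T ^\<^sub>m k \<in> carrier_mat n n" using car by auto
  have "M ^\<^sub>m k = P * T ^\<^sub>m k * Q" by (rule similar_mat_wit_pow_id[OF w])
  then have "mtr n (M ^\<^sub>m k) = mtr n ((P * T ^\<^sub>m k) * Q)" by simp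
  also have "\<dots> = mtr n (Q * (P * T ^\<^sub>m k))" using car Tk by (intro mtr_comm) auto
  also have "Q * (P * T ^\<^sub>m k) = (Q * P) * T ^\<^sub>m k" using car Tk by (metis assoc_mult_mat)
  also have "\<dots> = T ^\<^sub>m k" using car(4) Tk by (metis left_mult_one_mat)
  also have "mtr n (T ^\<^sub>m k) = (\<Sum>i<n. T $$ (i, i) ^ k)"
    unfolding mtr_def using upper_tri_pow[OF car(1) ut] by simp
  also have "\<dots> = (\<Sum>a\<leftarrow>as. a ^ k)"
  proof -
    have "as = map (\<lambda>i. T $$ (i, i)) [0..<n]" using dg car unfolding diag_mat_def by simp
    then have "(\<Sum>a\<leftarrow>as. a ^ k) = (\<Sum>i\<leftarrow>[0..<n]. T $$ (i, i) ^ k)" by (simp add: comp_def)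
    also have "\<dots> = (\<Sum>i<n. T $$ (i, i) ^ k)"
      by (simp add: interv_sum_list_conv_sum_set_nat atLeast0LessThan)
    finally show ?thesis by simp
  qed
  finally show ?thesis .
qed

lemma det_vander_zero:
  fixes as :: "complex list"
  defines "V \<equiv> mat (length as) (length as) (\<lambda>(l, i). as ! l ^ i)"
  shows "Determinant.det V = 0 \<longleftrightarrow> \<not> distinct as"
proof
  let ?n = "length as"
  have V: "V \<in> carrier_mat ?n ?n" unfolding V_def by simp
  assume d0: "Determinant.det V = 0"
  show "\<not> distinct as"
  proof
    assume dist: "distinct as"
    obtain v where v: "v \<in> carrier_vec ?n" "v \<noteq> 0\<^sub>v ?n" "V *\<^sub>v v = 0\<^sub>v ?n"
      using d0 det_0_iff_vec_prod_zero[OF V] by blast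
    define q where "q = (\<Sum>i<?n. monom (v $ i) i)"
    have cq: "coeff q k = (if k < ?n then v $ k else 0)" for k
      unfolding q_def by (simp add: coeff_sum coeff_monom)
    obtain k where k: "k < ?n" "v $ k \<noteq> 0"
      using v(1,2) by (metis eq_vecI index_zero_vec(1) carrier_vecD index_zero_vec(2))
    have q0: "q \<noteq> 0" using cq[of k] k by auto
    have degq: "degree q \<le> ?n - 1"
      by (rule degree_le) (use cq in auto)
    have roots: "set as \<subseteq> {x. poly q x = 0}"
    proof
      fix x assume "x \<in> set as"
      then obtain l where l: "l < ?n" "x = as ! l" by (metis in_set_conv_nth)
      have "(V *\<^sub>v v) $ l = 0" using v(3) l by simp
      moreover have "(V *\<^sub>v v) $ l = (\<Sum>i<?n. as ! l ^ i * v $ i)"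
        using l v(1) unfolding V_def by (auto simp: scalar_prod_def atLeast0LessThan)
      moreover have "poly q x = (\<Sum>i<?n. v $ i * x ^ i)"
        unfolding q_def by (simp add: poly_sum poly_monom)
      ultimately show "x \<in> {x. poly q x = 0}" using l by (simp add: mult.commute)
    qed
    have "?n = card (set as)" using dist by (simp add: distinct_card)
    also have "\<dots> \<le> card {x. poly q x = 0}"
      by (rule card_mono[OF poly_roots_finite[OF q0] roots])
    also have "\<dots> \<le> degree q" by (rule card_poly_roots_bound[OF q0])
    finally show False using degq k by linarith
  qed
next
  let ?n = "length as"
  have V: "V \<in> carrier_mat ?n ?n" unfolding V_def by simp
  assume "\<not> distinct as"
  then obtain i j where ij: "i < ?n" "j < ?n" "i \<noteq> j" "as ! i = as ! j"
    by (auto simp: distinct_conv_nth)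
  have "row V i = row V j" using ij unfolding V_def by (intro eq_vecI) auto
  then show "Determinant.det V = 0" by (rule det_identical_rows[OF V ij(3) ij(1) ij(2)])
qed

lemma hankel_det:
  fixes as :: "complex list"
  defines "V \<equiv> mat (length as) (length as) (\<lambda>(l, i). as ! l ^ i)"
  shows "Determinant.det (mat (length as) (length as) (\<lambda>(i, j). \<Sum>a\<leftarrow>as. a ^ (i + j)))
         = Determinant.det V * Determinant.det V"
proof -
  let ?n = "length as"
  have V: "V \<in> carrier_mat ?n ?n" unfolding V_def by simp
  have "mat ?n ?n (\<lambda>(i, j). \<Sum>a\<leftarrow>as. a ^ (i + j)) = transpose_mat V * V"
  proof (rule eq_matI)
    fix i j assume ij: "i < dim_row (transpose_mat V * V)" "j < dim_col (transpose_mat V * V)"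
    then have i: "i < ?n" and j: "j < ?n" using V by auto
    have "(transpose_mat V * V) $$ (i, j) = (\<Sum>l<?n. as ! l ^ i * as ! l ^ j)"
      using i j unfolding V_def by (auto simp: scalar_prod_def atLeast0LessThan)
    also have "\<dots> = (\<Sum>a\<leftarrow>as. a ^ (i + j))"
      by (simp add: sum_list_sum_nth power_add atLeast0LessThan)
    finally show "mat ?n ?n (\<lambda>(i, j). \<Sum>a\<leftarrow>as. a ^ (i + j)) $$ (i, j) = (transpose_mat V * V) $$ (i, j)"
      using i j by simp
  qed (use V in auto)
  then have "Determinant.det (mat ?n ?n (\<lambda>(i, j). \<Sum>a\<leftarrow>as. a ^ (i + j)))
       = Determinant.det (transpose_mat V) * Determinant.det V"
    using V by (simp add: det_mult[of _ ?n])
  also have "\<dots> = Determinant.det V * Determinant.det V" using det_transpose[OF V] by simp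
  finally show ?thesis .
qed

lemma mat_adjoint_index:
  fixes A :: "complex mat"
  assumes "A \<in> carrier_mat m n"
  shows "mat_adjoint A \<in> carrier_mat n m"
    and "\<And>j l. j < n \<Longrightarrow> l < m \<Longrightarrow> mat_adjoint A $$ (j, l) = cnj (A $$ (l, j))"
  using assms unfolding mat_adjoint_def by (auto simp: mat_of_rows_def)

lemma adj_cscalar:
  fixes A :: "complex mat"
  assumes A: "A \<in> carrier_mat m n" and w: "w \<in> carrier_vec m" and v: "v \<in> carrier_vec n"
  shows "(mat_adjoint A *\<^sub>v w) \<bullet>c v = w \<bullet>c (A *\<^sub>v v)"
proof -
  have ad: "mat_adjoint A \<in> carrier_mat n m" by (rule mat_adjoint_index(1)[OF A])
  have "(mat_adjoint A *\<^sub>v w) \<bullet>c v = (\<Sum>j<n. (\<Sum>l<m. cnj (A $$ (l, j)) * w $ l) * cnj (v $ j))"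
    using ad A w v mat_adjoint_index(2)[OF A]
    by (auto simp: scalar_prod_def atLeast0LessThan intro!: sum.cong)
  also have "\<dots> = (\<Sum>j<n. \<Sum>l<m. w $ l * (cnj (A $$ (l, j)) * cnj (v $ j)))"
    by (simp add: sum_distrib_left sum_distrib_right mult_ac)
  also have "\<dots> = (\<Sum>l<m. \<Sum>j<n. w $ l * (cnj (A $$ (l, j)) * cnj (v $ j)))"
    by (rule sum.swap)
  also have "\<dots> = (\<Sum>l<m. w $ l * cnj (\<Sum>j<n. A $$ (l, j) * v $ j))"
    by (simp add: sum_distrib_left)
  also have "\<dots> = w \<bullet>c (A *\<^sub>v v)"
    using A w v by (auto simp: scalar_prod_def atLeast0LessThan intro!: sum.cong)
  finally show ?thesis .
qed

lemma eig_nonneg: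
  fixes A :: "complex mat"
  assumes A: "A \<in> carrier_mat m n" and r: "poly (char_poly (mat_adjoint A * A)) a = 0"
  shows "Im a = 0 \<and> Re a \<ge> 0"
proof -
  let ?B = "mat_adjoint A * A"
  have ad: "mat_adjoint A \<in> carrier_mat n m" by (rule mat_adjoint_index(1)[OF A])
  have B: "?B \<in> carrier_mat n n" using ad A by auto
  have "eigenvalue ?B a" using eigenvalue_root_char_poly[OF B] r by simp
  then obtain v where v: "v \<in> carrier_vec n" "v \<noteq> 0\<^sub>v n" "?B *\<^sub>v v = a \<cdot>\<^sub>v v"
    unfolding eigenvalue_def eigenvector_def using B by auto
  define w where "w = A *\<^sub>v v"
  have w: "w \<in> carrier_vec m" using A v unfolding w_def by auto
  have "(?B *\<^sub>v v) \<bullet>c v = (mat_adjoint A *\<^sub>v w) \<bullet>c v"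
    unfolding w_def using ad A v by (simp add: assoc_mult_mat_vec)
  also have "\<dots> = w \<bullet>c w" unfolding w_def using adj_cscalar[OF A w v(1)] by (simp add: w_def)
  finally have e1: "(?B *\<^sub>v v) \<bullet>c v = w \<bullet>c w" .
  have "(?B *\<^sub>v v) \<bullet>c v = a * (v \<bullet>c v)" using v(3) v(1) by simp
  with e1 have eq: "a * (v \<bullet>c v) = w \<bullet>c w" by simp
  have p: "v \<bullet>c v > 0" using v by simp
  have q: "w \<bullet>c w \<ge> 0" by auto
  from p have p1: "Im (v \<bullet>c v) = 0" "Re (v \<bullet>c v) > 0" by (auto simp: less_complex_def)
  from q have q1: "Im (w \<bullet>c w) = 0" "Re (w \<bullet>c w) \<ge> 0" by (auto simp: less_eq_complex_def)
  have "Im a * Re (v \<bullet>c v) = 0" using arg_cong[OF eq, of Im] p1 q1 by simp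
  then have ia: "Im a = 0" using p1 by simp
  have "Re a * Re (v \<bullet>c v) \<ge> 0" using arg_cong[OF eq, of Re] p1 q1 ia by simp
  then have "Re a \<ge> 0" using p1 by (simp add: zero_le_mult_iff)
  with ia show ?thesis by simp
qed

lemma proots_lin: "proots (\<Prod>a\<leftarrow>as. [:- a, 1:]) = mset (as :: complex list)"
proof (induction as)
  case Nil
  then show ?case by simp
next
  case (Cons a as)
  have eq: "(\<Prod>a\<leftarrow>a # as. [:- a, 1:]) = [:- a, 1:] * (\<Prod>a\<leftarrow>as. [:- a, 1:])" by simp
  have nz: "(\<Prod>a\<leftarrow>as. [:- a, 1:]) \<noteq> (0 :: complex poly)" by (auto simp: prod_list_zero_iff)
  have nz1: "[:- a, 1:] \<noteq> (0 :: complex poly)" by simp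
  have lf: "proots [:- a, 1:] = {#a#}" using proots_linear_factor[of "- a"] by simp
  show ?case by (simp only: eq proots_mult[OF nz1 nz] lf Cons.IH) simp
qed

lemma count_ge2_iff: "(\<exists>s. 2 \<le> count (mset xs) s) \<longleftrightarrow> \<not> distinct xs"
proof
  assume "\<exists>s. 2 \<le> count (mset xs) s"
  then obtain s where s2: "2 \<le> count (mset xs) s" by blast
  then have "count (mset xs) s \<noteq> 0" by linarith
  then have sin: "s \<in> set xs" by (metis count_eq_zero_iff set_mset_mset)
  show "\<not> distinct xs"
  proof
    assume "distinct xs"
    then have "count (mset xs) s = (if s \<in> set xs then 1 else 0)" using distinct_count_atmost_1 by metis
    with s2 sin show False by simp
  qed
next
  assume "\<not> distinct xs"
  then obtain s where s: "count (mset xs) s \<noteq> (if s \<in> set xs then 1 else 0)"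
    by (auto simp: distinct_count_atmost_1)
  then have "s \<in> set xs" by (metis count_eq_zero_iff set_mset_mset)
  then have "count (mset xs) s \<ge> 1" by (simp add: Suc_le_eq)
  moreover have "count (mset xs) s \<noteq> 1" using s \<open>s \<in> set xs\<close> by simp
  ultimately have "2 \<le> count (mset xs) s" by linarith
  then show "\<exists>s. 2 \<le> count (mset xs) s" by blast
qed

lemma rep_iff:
  fixes A :: "complex mat"
  assumes A: "A \<in> carrier_mat m n" and c: "char_poly (mat_adjoint A * A) = (\<Prod>a\<leftarrow>as. [:- a, 1:])"
  shows "has_repeated_singular_values A \<longleftrightarrow> \<not> distinct as"
proof -
  let ?f = "\<lambda>z::complex. sqrt (Re z)"
  have sv: "singular_values A = mset (map ?f as)"
    unfolding singular_values_def conj_transpose_def c proots_lin by simp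
  have nn: "Im a = 0 \<and> Re a \<ge> 0" if "a \<in> set as" for a
  proof -
    have "poly (\<Prod>a\<leftarrow>as. [:- a, 1:]) a = 0" using that
      by (auto simp: poly_prod_list prod_list_zero_iff)
    then show ?thesis using eig_nonneg[OF A] c by simp
  qed
  have inj: "inj_on ?f (set as)"
  proof (rule inj_onI)
    fix a b assume ab: "a \<in> set as" "b \<in> set as" "?f a = ?f b"
    then have "Re a = Re b" by simp
    then show "a = b" using nn[OF ab(1)] nn[OF ab(2)] by (simp add: complex_eq_iff)
  qed
  have "has_repeated_singular_values A \<longleftrightarrow> \<not> distinct (map ?f as)"
    unfolding has_repeated_singular_values_def sv count_ge2_iff[symmetric] by simp
  also have "\<dots> \<longleftrightarrow> \<not> distinct as" using inj by (simp add: distinct_map)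
  finally show ?thesis .
qed

definition bb :: "nat \<Rightarrow> (nat \<Rightarrow> nat \<Rightarrow> complex) \<Rightarrow> nat \<Rightarrow> nat \<Rightarrow> complex" where
  "bb m a i j = (\<Sum>l<m. cnj (a l i) * a l j)"

fun pw :: "nat \<Rightarrow> nat \<Rightarrow> (nat \<Rightarrow> nat \<Rightarrow> complex) \<Rightarrow> nat \<Rightarrow> nat \<Rightarrow> nat \<Rightarrow> complex" where
  "pw n m a 0 i j = (if i = j then 1 else 0)"
| "pw n m a (Suc k) i j = (\<Sum>l<n. pw n m a k i l * bb m a l j)"

definition DD :: "nat \<Rightarrow> nat \<Rightarrow> (nat \<Rightarrow> nat \<Rightarrow> complex) \<Rightarrow> complex" where
  "DD n m a = Determinant.det (mat n n (\<lambda>(i, j). \<Sum>i'<n. pw n m a (i + j) i' i'))"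

lemma DD_iff:
  fixes A :: "complex mat"
  assumes A: "A \<in> carrier_mat m n"
  shows "DD n m (\<lambda>i j. A $$ (i, j)) = 0 \<longleftrightarrow> has_repeated_singular_values A"
proof -
  let ?a = "\<lambda>i j. A $$ (i, j)"
  let ?B = "mat_adjoint A * A"
  have ad: "mat_adjoint A \<in> carrier_mat n m" by (rule mat_adjoint_index(1)[OF A])
  have B: "?B \<in> carrier_mat n n" using ad A by auto
  have Bij: "?B $$ (i, j) = bb m ?a i j" if ij: "i < n" "j < n" for i j
    using ij ad A mat_adjoint_index(2)[OF A]
    by (auto simp: bb_def scalar_prod_def atLeast0LessThan intro!: sum.cong)
  have Bk: "?B ^\<^sub>m k = mat n n (\<lambda>(i, j). pw n m ?a k i j)" for k
  proof (induction k)
    case 0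
    show ?case using B by (auto intro!: eq_matI)
  next
    case (Suc k)
    have Bk': "?B ^\<^sub>m k \<in> carrier_mat n n" using B by auto
    show ?case
    proof (rule eq_matI)
      fix i j assume "i < dim_row (mat n n (\<lambda>(i, j). pw n m ?a (Suc k) i j))"
        "j < dim_col (mat n n (\<lambda>(i, j). pw n m ?a (Suc k) i j))"
      then have ij: "i < n" "j < n" by auto
      have "(?B ^\<^sub>m Suc k) $$ (i, j) = (?B ^\<^sub>m k * ?B) $$ (i, j)" by simp
      also have "\<dots> = (\<Sum>l<n. (?B ^\<^sub>m k) $$ (i, l) * ?B $$ (l, j))"
        by (rule mult_index_sum[OF Bk' B ij])
      also have "\<dots> = (\<Sum>l<n. pw n m ?a k i l * bb m ?a l j)"
        using ij Bij by (auto simp: Suc.IH intro!: sum.cong)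
      finally show "(?B ^\<^sub>m Suc k) $$ (i, j) = mat n n (\<lambda>(i, j). pw n m ?a (Suc k) i j) $$ (i, j)"
        using ij by simp
    qed (use B in auto)
  qed
  obtain as where as: "char_poly ?B = (\<Prod>a\<leftarrow>as. [:- a, 1:])" "length as = n"
    using char_poly_factorized[OF B] by blast
  have ps: "(\<Sum>i'<n. pw n m ?a k i' i') = (\<Sum>a\<leftarrow>as. a ^ k)" for k
  proof -
    have "(\<Sum>i'<n. pw n m ?a k i' i') = mtr n (?B ^\<^sub>m k)" unfolding mtr_def Bk by simp
    also have "\<dots> = (\<Sum>a\<leftarrow>as. a ^ k)" by (rule trace_pow_schur[OF B as(1)])
    finally show ?thesis .
  qed
  have "DD n m ?a = Determinant.det (mat (length as) (length as) (\<lambda>(i, j). \<Sum>a\<leftarrow>as. a ^ (i + j)))"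
    unfolding DD_def as(2) by (simp add: ps)
  also have "\<dots> = Determinant.det (mat (length as) (length as) (\<lambda>(l, i). as ! l ^ i)) *
                  Determinant.det (mat (length as) (length as) (\<lambda>(l, i). as ! l ^ i))"
    by (rule hankel_det)
  finally have "DD n m ?a = 0 \<longleftrightarrow> Determinant.det (mat (length as) (length as) (\<lambda>(l, i). as ! l ^ i)) = 0"
    by simp
  also have "\<dots> \<longleftrightarrow> \<not> distinct as" by (rule det_vander_zero)
  also have "\<dots> \<longleftrightarrow> has_repeated_singular_values A" using rep_iff[OF A as(1)] by simp
  finally show ?thesis .
qed

lemma LA_pw:
  assumes U: "open U"
    and h1: "\<And>i j. i < m \<Longrightarrow> j < n \<Longrightarrow> LA U (\<lambda>x. a x i j)"
    and h2: "\<And>i j. i < m \<Longrightarrow> j < n \<Longrightarrow> LA U (\<lambda>x. cnj (a x i j))"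
  shows "\<forall>i<n. \<forall>j<n. LA U (\<lambda>x. pw n m (a x) k i j)"
proof (induction k)
  case 0
  show ?case using LA_const[OF U] by simp
next
  case (Suc k)
  have b: "LA U (\<lambda>x. bb m (a x) l j)" if "l < n" "j < n" for l j
    unfolding bb_def using that by (intro LA_sum[OF U] LA_mult h1 h2) auto
  show ?case
    using Suc.IH b by (simp, intro allI impI LA_sum[OF U] LA_mult) auto
qed

lemma LA_DD:
  assumes U: "open U"
    and h1: "\<And>i j. i < m \<Longrightarrow> j < n \<Longrightarrow> LA U (\<lambda>x. a x i j)"
    and h2: "\<And>i j. i < m \<Longrightarrow> j < n \<Longrightarrow> LA U (\<lambda>x. cnj (a x i j))"
  shows "LA U (\<lambda>x. DD n m (a x))"
proof -
  have eq: "DD n m (a x) = (\<Sum>p\<in>{p. p permutes {0..<n}}. signof p *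
      (\<Prod>i = 0..<n. (\<Sum>i'<n. pw n m (a x) (i + p i) i' i')))" for x
    unfolding DD_def by (subst det_def'[of _ n]) auto
  have pw: "\<forall>i<n. \<forall>j<n. LA U (\<lambda>x. pw n m (a x) k i j)" for k by (rule LA_pw[OF U h1 h2])
  show ?thesis
    unfolding eq
    by (intro LA_sum[OF U] LA_prod[OF U] LA_mult LA_const[OF U] finite_permutations) (use pw in auto)
qed

theorem theorem3p8:
  fixes m n :: nat and U :: "real set" and F :: "real \<Rightarrow> complex mat"
  assumes "m \<ge> n"
    and "open U" and "is_interval U" and "U \<noteq> {}"
    and "\<And>x. x \<in> U \<Longrightarrow> F x \<in> carrier_mat m n"
    and "\<And>i j. i < m \<Longrightarrow> j < n \<Longrightarrow> real_analytic_on (\<lambda>x. F x $$ (i, j)) U"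
  shows "{x \<in> U. has_repeated_singular_values (F x)} = U
       \<or> (\<forall>x\<in>U. \<not> x islimpt {x \<in> U. has_repeated_singular_values (F x)})"
proof -
  define D where "D = (\<lambda>x. DD n m (\<lambda>i j. F x $$ (i, j)))"
  have h1: "LA U (\<lambda>x. F x $$ (i, j))" if "i < m" "j < n" for i j
    using assms(6)[OF that] by (rule RA_LA)
  have h2: "LA U (\<lambda>x. cnj (F x $$ (i, j)))" if "i < m" "j < n" for i j
    using RA_cnj[OF assms(6)[OF that]] by (rule RA_LA)
  have LD: "LA U D" unfolding D_def by (rule LA_DD[OF assms(2) h1 h2])
  have conn: "connected U" by (rule is_interval_connected[OF assms(3)])
  have Y: "{x \<in> U. has_repeated_singular_values (F x)} = {x \<in> U. D x = 0}"
    using DD_iff[OF assms(5)] unfolding D_def by auto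
  from LA_identity[OF LD conn] show ?thesis unfolding Y by auto
qed

end
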